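(* Let $G$ be a countable abelian group with $\dim_{\mathbb Q}(G\otimes\mathbb Q)<\infty$, and let $H$ be the subgroup of $G$ generated by a maximal independent system of elements of infinite order of $G$ (so $H$ is free abelian of rank $\dim_{\mathbb Q}(G\otimes \mathbb Q)$). Then the exact sequence \[0\to H\overset{i}{\to} G\overset{\pi}{\to} G/H\to 0\] (with $i$ the inclusion and $\pi$ the quotient map) is coarsely split. Hence $G$ is coarsely equivalent to $H\oplus G/H$.
   Context: A proper norm on a group $G$ is a map $\|\cdot\|:G\to\mathbb R_{\ge 0}$ with $\|g\|=0$ iff $g$ is the identity, $\|g\|=\|g^{-1}\|$, $\|gh\|\le\|g\|+\|h\|$, and $\{g:\|g\|\le K\}$ finite for every $K>0$; it induces a proper left invariant metric $d(g,h)=\|g^{-1}h\|$. A map $f:(X,d_X)\to(Y,d_Y)$ is coarse if for every $\delta>0$ there is $\epsilon>0$ with $d_X(x,y)\le\delta\Rightarrow d_Y(f(x),f(y))\le\epsilon$; it is a coarse equivalence if there is a coarse $g:Y\to X$ and constants $K_1,K_2$ with $d_X(g(f(x)),x)\le K_1$, $d_Y(f(g(y)),y)\le K_2$ for all $x,y$. Countable groups are regarded as metric spaces via proper left invariant metrics (any two such metrics on the same countable group are coarsely equivalent via the identity). An exact sequence $1\to K\overset{i}{\to}G\overset{\pi}{\to}Q\to1$ is coarsely split if there are proper left invariant metrics $d_K,d_G,d_Q$ on $K,G,Q$ and a coarse equivalence $f:(G,d_G)\to(K\oplus Q,d_K\oplus d_Q)$ (where $d_K\oplus d_Q$ is the $\ell_1$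 sum metric) such that $f\circ i$ is at bounded distance from the inclusion $k\mapsto(k,1)$ and $\pi'\circ f$ is at bounded distance from $\pi$, where $\pi':K\oplus Q\to Q$ is the projection. A set of nonzero elements $\{x_j\}$ of an abelian group is independent if $\sum n_jx_j=0$ (finite sum, $n_j\in\mathbb Z$) implies $n_jx_j=0$ for all $j$. *)

theory Defs
  imports "HOL-Algebra.Algebra"
begin

definition proper_norm :: "('a, 'b) monoid_scheme \<Rightarrow> ('a \<Rightarrow> real) \<Rightarrow> bool" where
  "proper_norm G N \<longleftrightarrow>
     (\<forall>g\<in>carrier G. N g \<ge> 0) \<and>
     (\<forall>g\<in>carrier G. N g = 0 \<longleftrightarrow> g = \<one>\<^bsub>G\<^esub>) \<and>
     (\<forall>g\<in>carrier G. N (inv\<^bsub>G\<^esub> g) = N g) \<and>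
     (\<forall>g\<in>carrier G. \<forall>h\<in>carrier G. N (g \<otimes>\<^bsub>G\<^esub> h) \<le> N g + N h) \<and>
     (\<forall>K>0. finite {g\<in>carrier G. N g \<le> K})"

definition proper_li_metric :: "('a, 'b) monoid_scheme \<Rightarrow> ('a \<Rightarrow> 'a \<Rightarrow> real) \<Rightarrow> bool" where
  "proper_li_metric G d \<longleftrightarrow>
     (\<exists>N. proper_norm G N \<and>
          (\<forall>g\<in>carrier G. \<forall>h\<in>carrier G. d g h = N (inv\<^bsub>G\<^esub> g \<otimes>\<^bsub>G\<^esub> h)))"

definition coarse_map ::
  "'a set \<Rightarrow> ('a \<Rightarrow> 'a \<Rightarrow> real) \<Rightarrow> 'b set \<Rightarrow> ('b \<Rightarrow> 'b \<Rightarrow> real) \<Rightarrow> ('a \<Rightarrow> 'b) \<Rightarrow> bool" where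
  "coarse_map A dA B dB f \<longleftrightarrow>
     (\<forall>x\<in>A. f x \<in> B) \<and>
     (\<forall>delta>0. \<exists>eps>0. \<forall>x\<in>A. \<forall>y\<in>A. dA x y \<le> delta \<longrightarrow> dB (f x) (f y) \<le> eps)"

definition coarse_equiv ::
  "'a set \<Rightarrow> ('a \<Rightarrow> 'a \<Rightarrow> real) \<Rightarrow> 'b set \<Rightarrow> ('b \<Rightarrow> 'b \<Rightarrow> real) \<Rightarrow> ('a \<Rightarrow> 'b) \<Rightarrow> bool" where
  "coarse_equiv A dA B dB f \<longleftrightarrow>
     coarse_map A dA B dB f \<and>
     (\<exists>g K1 K2. coarse_map B dB A dA g \<and>
        (\<forall>x\<in>A. dA (g (f x)) x \<le> K1) \<and> (\<forall>y\<in>B. dB (f (g y)) y \<le> K2))"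

definition sum_metric :: "('a \<Rightarrow> 'a \<Rightarrow> real) \<Rightarrow> ('b \<Rightarrow> 'b \<Rightarrow> real) \<Rightarrow> ('a \<times> 'b) \<Rightarrow> ('a \<times> 'b) \<Rightarrow> real" where
  "sum_metric dK dQ p q = dK (fst p) (fst q) + dQ (snd p) (snd q)"

definition coarsely_split ::
  "('k, 'c) monoid_scheme \<Rightarrow> ('g, 'd) monoid_scheme \<Rightarrow> ('q, 'e) monoid_scheme
     \<Rightarrow> ('k \<Rightarrow> 'g) \<Rightarrow> ('g \<Rightarrow> 'q) \<Rightarrow> bool" where
  "coarsely_split K G Q i \<pi> \<longleftrightarrow>
     (\<exists>dK dG dQ f.
        proper_li_metric K dK \<and> proper_li_metric G dG \<and> proper_li_metric Q dQ \<and>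
        coarse_equiv (carrier G) dG (carrier K \<times> carrier Q) (sum_metric dK dQ) f \<and>
        (\<exists>C. \<forall>k\<in>carrier K. sum_metric dK dQ (f (i k)) (k, \<one>\<^bsub>Q\<^esub>) \<le> C) \<and>
        (\<exists>C. \<forall>g\<in>carrier G. dQ (snd (f g)) (\<pi> g) \<le> C))"

definition coarsely_equivalent_groups ::
  "('g, 'd) monoid_scheme \<Rightarrow> ('h, 'e) monoid_scheme \<Rightarrow> bool" where
  "coarsely_equivalent_groups G H \<longleftrightarrow>
     (\<exists>dG dH f. proper_li_metric G dG \<and> proper_li_metric H dH \<and>
        coarse_equiv (carrier G) dG (carrier H) dH f)"

definition independent_set :: "('a, 'b) monoid_scheme \<Rightarrow> 'a set \<Rightarrow> bool" where
  "independent_set G S \<longleftrightarrow>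
     S \<subseteq> carrier G \<and> \<one>\<^bsub>G\<^esub> \<notin> S \<and>
     (\<forall>F n. F \<subseteq> S \<longrightarrow> finite F \<longrightarrow>
        finprod G (\<lambda>x. x [^]\<^bsub>G\<^esub> (n x :: int)) F = \<one>\<^bsub>G\<^esub> \<longrightarrow>
        (\<forall>x\<in>F. x [^]\<^bsub>G\<^esub> (n x) = \<one>\<^bsub>G\<^esub>))"

definition infinite_order :: "('a, 'b) monoid_scheme \<Rightarrow> 'a \<Rightarrow> bool" where
  "infinite_order G x \<longleftrightarrow> x \<in> carrier G \<and> (\<forall>n::int. x [^]\<^bsub>G\<^esub> n = \<one>\<^bsub>G\<^esub> \<longrightarrow> n = 0)"

definition indep_inf_order :: "('a, 'b) monoid_scheme \<Rightarrow> 'a set \<Rightarrow> bool" where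
  "indep_inf_order G S \<longleftrightarrow> independent_set G S \<and> (\<forall>x\<in>S. infinite_order G x)"

definition maximal_indep_inf_order :: "('a, 'b) monoid_scheme \<Rightarrow> 'a set \<Rightarrow> bool" where
  "maximal_indep_inf_order G S \<longleftrightarrow>
     indep_inf_order G S \<and> (\<forall>T. S \<subset> T \<longrightarrow> \<not> indep_inf_order G T)"

(* dim_Q (G \<otimes> Q) < \<infinity>: the images in G\<otimes>Q of finitely many elements are Q-linearly
   independent iff they form an independent system of elements of infinite order; so finite
   dimension means a uniform bound on the size of such systems. *)
definition finite_rational_rank :: "('a, 'b) monoid_scheme \<Rightarrow> bool" where
  "finite_rational_rank G \<longleftrightarrow>
     (\<exists>r::nat. \<forall>S. finite S \<longrightarrow> indep_inf_order G S \<longrightarrow> card S \<le> r)"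

end

theory Submission
  imports Defs
begin


definition lprod :: "('a,'b) monoid_scheme \<Rightarrow> 'a list \<Rightarrow> 'a" where
  "lprod G xs = foldr (\<lambda>x y. x \<otimes>\<^bsub>G\<^esub> y) xs \<one>\<^bsub>G\<^esub>"

definition wnorm :: "('a,'b) monoid_scheme \<Rightarrow> ('a \<Rightarrow> nat) \<Rightarrow> 'a \<Rightarrow> nat" where
  "wnorm G e g = (LEAST n. \<exists>xs. set xs \<subseteq> carrier G \<and> lprod G xs = g \<and>
      (\<Sum>x\<leftarrow>xs. e x + e (inv\<^bsub>G\<^esub> x) + 1) = n)"

lemma sum_list_ge_length: "length xs \<le> (\<Sum>x\<leftarrow>xs. (f x::nat) + 1)"
  by (induction xs) auto

lemma sum_list_ge_elem: "x \<in> set xs \<Longrightarrow> (f x::nat) \<le> (\<Sum>x\<leftarrow>xs. f x)"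
  by (induction xs) auto

context group begin

lemma lprod_closed: "set xs \<subseteq> carrier G \<Longrightarrow> lprod G xs \<in> carrier G"
  by (induction xs) (auto simp: lprod_def)

lemma lprod_append: "set xs \<subseteq> carrier G \<Longrightarrow> set ys \<subseteq> carrier G \<Longrightarrow>
   lprod G (xs @ ys) = lprod G xs \<otimes> lprod G ys"
proof (induction xs)
  case Nil then show ?case using lprod_closed by (simp add: lprod_def)
next
  case (Cons x xs)
  then show ?case using lprod_closed[of xs] lprod_closed[of ys]
    by (simp add: lprod_def m_assoc)
qed

lemma lprod_inv: "set xs \<subseteq> carrier G \<Longrightarrow> lprod G (rev (map (m_inv G) xs)) = inv (lprod G xs)"
proof (induction xs)
  case Nil then show ?case by (simp add: lprod_def)
next
  case (Cons x xs)
  have "lprod G (rev (map (m_inv G) (x#xs))) = lprod G (rev (map (m_inv G) xs)) \<otimes> lprod G [inv x]"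
    using Cons.prems by (subst lprod_append[symmetric]) auto
  also have "\<dots> = inv (lprod G xs) \<otimes> inv x" using Cons by (simp add: lprod_def)
  also have "\<dots> = inv (x \<otimes> lprod G xs)" using Cons.prems lprod_closed[of xs]
    by (simp add: inv_mult_group)
  finally show ?case by (simp add: lprod_def)
qed

lemma wnorm_ex:
  assumes "g \<in> carrier G"
  shows "\<exists>xs. set xs \<subseteq> carrier G \<and> lprod G xs = g \<and>
      (\<Sum>x\<leftarrow>xs. e x + e (inv x) + 1) = wnorm G e g"
proof -
  have "\<exists>n xs. set xs \<subseteq> carrier G \<and> lprod G xs = g \<and> (\<Sum>x\<leftarrow>xs. e x + e (inv x) + 1) = n"
    using assms by (intro exI[of _ "e g + e (inv g) + 1"] exI[of _ "[g]"]) (auto simp: lprod_def)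
  then show ?thesis unfolding wnorm_def by (rule LeastI_ex)
qed

lemma wnorm_le:
  assumes "set xs \<subseteq> carrier G" "lprod G xs = g"
  shows "wnorm G e g \<le> (\<Sum>x\<leftarrow>xs. e x + e (inv x) + 1)"
  unfolding wnorm_def by (rule Least_le) (use assms in blast)

lemma sumw_rev_inv: fixes e :: "'a \<Rightarrow> nat" shows "set xs \<subseteq> carrier G \<Longrightarrow>
   (\<Sum>x\<leftarrow>rev (map (m_inv G) xs). e x + e (inv x) + 1) = (\<Sum>x\<leftarrow>xs. e x + e (inv x) + 1)"
proof (induction xs)
  case Nil then show ?case by simp
next
  case (Cons x xs)
  then have "(\<Sum>x\<leftarrow>rev (map (m_inv G) xs). e x + e (inv x) + 1) = (\<Sum>x\<leftarrow>xs. e x + e (inv x) + 1)"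
    "x \<in> carrier G" by auto
  then show ?case by simp
qed

lemma proper_norm_wnorm:
  assumes inj: "inj_on e (carrier G)"
  shows "proper_norm G (\<lambda>g. real (wnorm G e g))"
  unfolding proper_norm_def
proof (intro conjI ballI allI impI)
  fix g assume g: "g \<in> carrier G"
  show "real (wnorm G e g) = 0 \<longleftrightarrow> g = \<one>"
  proof
    assume "real (wnorm G e g) = 0"
    then obtain xs where xs: "set xs \<subseteq> carrier G" "lprod G xs = g" "(\<Sum>x\<leftarrow>xs. e x + e (inv x) + 1) = 0"
      using wnorm_ex[OF g, of e] by auto
    then have "xs = []" using sum_list_ge_length[of xs "\<lambda>x. e x + e (inv x)"] by simp
    then show "g = \<one>" using xs by (simp add: lprod_def)
  next
    assume "g = \<one>"
    then show "real (wnorm G e g) = 0" using wnorm_le[of "[]" g e] by (simp add: lprod_def)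
  qed
  show "real (wnorm G e (inv g)) = real (wnorm G e g)"
  proof -
    have "wnorm G e (inv g) \<le> wnorm G e g"
    proof -
      obtain xs where xs: "set xs \<subseteq> carrier G" "lprod G xs = g" "(\<Sum>x\<leftarrow>xs. e x + e (inv x) + 1) = wnorm G e g"
        using wnorm_ex[OF g, of e] by auto
      then show ?thesis using wnorm_le[of "rev (map (m_inv G) xs)" "inv g" e] lprod_inv[OF xs(1)]
        sumw_rev_inv[OF xs(1), of e] by auto
    qed
    moreover have "wnorm G e g \<le> wnorm G e (inv g)"
    proof -
      obtain xs where xs: "set xs \<subseteq> carrier G" "lprod G xs = inv g" "(\<Sum>x\<leftarrow>xs. e x + e (inv x) + 1) = wnorm G e (inv g)"
        using wnorm_ex[of "inv g" e] g by auto
      then show ?thesis using wnorm_le[of "rev (map (m_inv G) xs)" "g" e] lprod_inv[OF xs(1)]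
        sumw_rev_inv[OF xs(1), of e] g by auto
    qed
    ultimately show ?thesis by simp
  qed
next
  fix g h assume g: "g \<in> carrier G" and h: "h \<in> carrier G"
  obtain xs where xs: "set xs \<subseteq> carrier G" "lprod G xs = g" "(\<Sum>x\<leftarrow>xs. e x + e (inv x) + 1) = wnorm G e g"
    using wnorm_ex[OF g, of e] by auto
  obtain ys where ys: "set ys \<subseteq> carrier G" "lprod G ys = h" "(\<Sum>x\<leftarrow>ys. e x + e (inv x) + 1) = wnorm G e h"
    using wnorm_ex[OF h, of e] by auto
  have "wnorm G e (g \<otimes> h) \<le> wnorm G e g + wnorm G e h"
    using wnorm_le[of "xs @ ys" "g \<otimes> h" e] xs ys lprod_append[OF xs(1) ys(1)] by auto
  then show "real (wnorm G e (g \<otimes> h)) \<le> real (wnorm G e g) + real (wnorm G e h)" by linarith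
next
  fix g show "0 \<le> real (wnorm G e g)" by simp
next
  fix K :: real assume K: "K > 0"
  define n where "n = nat \<lfloor>K\<rfloor>"
  define A where "A = {a \<in> carrier G. e a \<le> n}"
  have finA: "finite A"
  proof -
    have "inj_on e A" using inj by (rule inj_on_subset) (auto simp: A_def)
    moreover have "finite (e ` A)" by (rule finite_subset[of _ "{..n}"]) (auto simp: A_def)
    ultimately show ?thesis using finite_imageD by blast
  qed
  have "{g \<in> carrier G. real (wnorm G e g) \<le> K} \<subseteq> lprod G ` {xs. set xs \<subseteq> A \<and> length xs \<le> n}"
  proof
    fix g assume "g \<in> {g \<in> carrier G. real (wnorm G e g) \<le> K}"
    then have g: "g \<in> carrier G" and gK: "real (wnorm G e g) \<le> K" by auto
    have wn: "wnorm G e g \<le> n" using gK K unfolding n_def by linarith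
    obtain xs where xs: "set xs \<subseteq> carrier G" "lprod G xs = g" "(\<Sum>x\<leftarrow>xs. e x + e (inv x) + 1) = wnorm G e g"
      using wnorm_ex[OF g, of e] by auto
    have "length xs \<le> n" using sum_list_ge_length[of xs "\<lambda>x. e x + e (inv x)"] xs wn by simp
    moreover have "set xs \<subseteq> A"
    proof
      fix x assume x: "x \<in> set xs"
      have "e x + e (inv x) + 1 \<le> (\<Sum>x\<leftarrow>xs. e x + e (inv x) + 1)"
        by (rule sum_list_ge_elem[OF x])
      then show "x \<in> A" using x xs wn by (auto simp: A_def)
    qed
    ultimately show "g \<in> lprod G ` {xs. set xs \<subseteq> A \<and> length xs \<le> n}" using xs by auto
  qed
  moreover have "finite (lprod G ` {xs. set xs \<subseteq> A \<and> length xs \<le> n})"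
    using finite_lists_length_le[OF finA] by blast
  ultimately show "finite {g \<in> carrier G. real (wnorm G e g) \<le> K}" by (rule finite_subset)
qed

lemma countable_proper_li_metric:
  assumes "countable (carrier G)"
  shows "\<exists>d. proper_li_metric G d"
proof -
  obtain e :: "'a \<Rightarrow> nat" where "inj_on e (carrier G)" using assms unfolding countable_def by blast
  then show ?thesis unfolding proper_li_metric_def
    by (intro exI[of _ "\<lambda>g h. real (wnorm G e (inv g \<otimes> h))"] exI[of _ "\<lambda>g. real (wnorm G e g)"])
       (simp add: proper_norm_wnorm)
qed

end



lemma le_sum_fin: "finite W \<Longrightarrow> (\<And>w. w \<in> W \<Longrightarrow> (N w::real) \<ge> 0) \<Longrightarrow> z \<in> W \<Longrightarrow> N z \<le> sum N W"
  by (rule member_le_sum) auto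

lemma proper_normD:
  assumes "proper_norm G N"
  shows pn_nonneg: "\<And>g. g \<in> carrier G \<Longrightarrow> N g \<ge> 0"
    and pn_zero: "\<And>g. g \<in> carrier G \<Longrightarrow> N g = 0 \<longleftrightarrow> g = \<one>\<^bsub>G\<^esub>"
    and pn_inv: "\<And>g. g \<in> carrier G \<Longrightarrow> N (inv\<^bsub>G\<^esub> g) = N g"
    and pn_tri: "\<And>g h. g \<in> carrier G \<Longrightarrow> h \<in> carrier G \<Longrightarrow> N (g \<otimes>\<^bsub>G\<^esub> h) \<le> N g + N h"
    and pn_fin: "\<And>K. K > 0 \<Longrightarrow> finite {g\<in>carrier G. N g \<le> K}"
  using assms unfolding proper_norm_def by blast+

lemma DirProd_proper_li_metric:
  assumes gK: "group K" and gQ: "group Q"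
    and mK: "proper_li_metric K dK" and mQ: "proper_li_metric Q dQ"
  shows "proper_li_metric (K \<times>\<times> Q) (sum_metric dK dQ)"
proof -
  interpret K: group K by fact
  interpret Q: group Q by fact
  obtain NK where NK: "proper_norm K NK" "\<forall>g\<in>carrier K. \<forall>h\<in>carrier K. dK g h = NK (inv\<^bsub>K\<^esub> g \<otimes>\<^bsub>K\<^esub> h)"
    using mK unfolding proper_li_metric_def by blast
  obtain NQ where NQ: "proper_norm Q NQ" "\<forall>g\<in>carrier Q. \<forall>h\<in>carrier Q. dQ g h = NQ (inv\<^bsub>Q\<^esub> g \<otimes>\<^bsub>Q\<^esub> h)"
    using mQ unfolding proper_li_metric_def by blast
  define N where "N = (\<lambda>p. NK (fst p) + NQ (snd p))"
  note K1 = proper_normD[OF NK(1)] and Q1 = proper_normD[OF NQ(1)]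
  have pn: "proper_norm (K \<times>\<times> Q) N"
    unfolding proper_norm_def
  proof (intro conjI ballI allI impI)
    fix g assume g: "g \<in> carrier (K \<times>\<times> Q)"
    obtain g1 g2 where gg: "g = (g1, g2)" "g1 \<in> carrier K" "g2 \<in> carrier Q" using g by auto
    have a: "NK g1 \<ge> 0" "NQ g2 \<ge> 0" using K1(1) Q1(1) gg by auto
    show "N g \<ge> 0" using a gg unfolding N_def by simp
    have "N g = 0 \<longleftrightarrow> NK g1 = 0 \<and> NQ g2 = 0" using a gg unfolding N_def by auto
    also have "\<dots> \<longleftrightarrow> g1 = \<one>\<^bsub>K\<^esub> \<and> g2 = \<one>\<^bsub>Q\<^esub>" using K1(2) Q1(2) gg by blast
    finally show "N g = 0 \<longleftrightarrow> g = \<one>\<^bsub>K \<times>\<times> Q\<^esub>" using gg by simp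
    have "inv\<^bsub>K \<times>\<times> Q\<^esub> g = (inv\<^bsub>K\<^esub> g1, inv\<^bsub>Q\<^esub> g2)" using inv_DirProd[OF gK gQ gg(2) gg(3)] gg(1) by simp
    then show "N (inv\<^bsub>K \<times>\<times> Q\<^esub> g) = N g" using K1(3) Q1(3) gg unfolding N_def by simp
  next
    fix g h assume g: "g \<in> carrier (K \<times>\<times> Q)" and h: "h \<in> carrier (K \<times>\<times> Q)"
    obtain g1 g2 where gg: "g = (g1, g2)" "g1 \<in> carrier K" "g2 \<in> carrier Q" using g by auto
    obtain h1 h2 where hh: "h = (h1, h2)" "h1 \<in> carrier K" "h2 \<in> carrier Q" using h by auto
    have t1: "NK (g1 \<otimes>\<^bsub>K\<^esub> h1) \<le> NK g1 + NK h1" using K1(4) gg hh by blast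
    have t2: "NQ (g2 \<otimes>\<^bsub>Q\<^esub> h2) \<le> NQ g2 + NQ h2" using Q1(4) gg hh by blast
    show "N (g \<otimes>\<^bsub>K \<times>\<times> Q\<^esub> h) \<le> N g + N h"
      using t1 t2 gg(1) hh(1) unfolding N_def by simp
  next
    fix R :: real assume R: "R > 0"
    have "{g \<in> carrier (K \<times>\<times> Q). N g \<le> R} \<subseteq> {g\<in>carrier K. NK g \<le> R} \<times> {g\<in>carrier Q. NQ g \<le> R}"
    proof
      fix g assume "g \<in> {g \<in> carrier (K \<times>\<times> Q). N g \<le> R}"
      then obtain g1 g2 where gg: "g = (g1, g2)" "g1 \<in> carrier K" "g2 \<in> carrier Q" "NK g1 + NQ g2 \<le> R"
        unfolding N_def by auto
      have "NK g1 \<ge> 0" "NQ g2 \<ge> 0" using K1(1) Q1(1) gg by auto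
      then show "g \<in> {g\<in>carrier K. NK g \<le> R} \<times> {g\<in>carrier Q. NQ g \<le> R}"
        using gg by auto
    qed
    moreover have "finite ({g\<in>carrier K. NK g \<le> R} \<times> {g\<in>carrier Q. NQ g \<le> R})"
      using K1(5) Q1(5) R by blast
    ultimately show "finite {g \<in> carrier (K \<times>\<times> Q). N g \<le> R}" by (rule finite_subset)
  qed
  show ?thesis unfolding proper_li_metric_def
  proof (intro exI[of _ N] conjI pn ballI)
    fix g h assume g: "g \<in> carrier (K \<times>\<times> Q)" and h: "h \<in> carrier (K \<times>\<times> Q)"
    obtain g1 g2 where gg: "g = (g1, g2)" "g1 \<in> carrier K" "g2 \<in> carrier Q" using g by auto
    obtain h1 h2 where hh: "h = (h1, h2)" "h1 \<in> carrier K" "h2 \<in> carrier Q" using h by auto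
    have "inv\<^bsub>K \<times>\<times> Q\<^esub> g \<otimes>\<^bsub>K \<times>\<times> Q\<^esub> h = (inv\<^bsub>K\<^esub> g1 \<otimes>\<^bsub>K\<^esub> h1, inv\<^bsub>Q\<^esub> g2 \<otimes>\<^bsub>Q\<^esub> h2)"
      using inv_DirProd[OF gK gQ gg(2) gg(3)] gg(1) hh(1) mult_DirProd by metis
    moreover have "dK g1 h1 = NK (inv\<^bsub>K\<^esub> g1 \<otimes>\<^bsub>K\<^esub> h1)" using NK(2) gg hh by blast
    moreover have "dQ g2 h2 = NQ (inv\<^bsub>Q\<^esub> g2 \<otimes>\<^bsub>Q\<^esub> h2)" using NQ(2) gg hh by blast
    ultimately show "sum_metric dK dQ g h = N (inv\<^bsub>K \<times>\<times> Q\<^esub> g \<otimes>\<^bsub>K \<times>\<times> Q\<^esub> h)"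
      using gg hh by (simp add: sum_metric_def N_def)
  qed
qed




context comm_group begin

lemma inv_eqI: "a \<in> carrier G \<Longrightarrow> b \<in> carrier G \<Longrightarrow> c \<in> carrier G \<Longrightarrow> a \<otimes> c = b \<Longrightarrow> inv a \<otimes> b = c"
proof -
  assume c: "a \<in> carrier G" "b \<in> carrier G" "c \<in> carrier G" "a \<otimes> c = b"
  then show ?thesis using inv_solve_left[of c a b] by simp
qed

lemma id6: "x \<in> carrier G \<Longrightarrow> y \<in> carrier G \<Longrightarrow> x \<otimes> (inv x \<otimes> y) = y"
  by (simp add: m_assoc[symmetric])

lemma id6': "x \<in> carrier G \<Longrightarrow> y \<in> carrier G \<Longrightarrow> inv x \<otimes> (x \<otimes> y) = y"
  by (simp add: m_assoc[symmetric])

lemma id1: "x\<in>carrier G \<Longrightarrow> b\<in>carrier G \<Longrightarrow> sx\<in>carrier G \<Longrightarrow> sy\<in>carrier G \<Longrightarrow>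
   inv (x \<otimes> inv sx) \<otimes> ((x \<otimes> b) \<otimes> inv sy) = sx \<otimes> b \<otimes> inv sy"
  by (rule inv_eqI) (simp_all add: m_assoc id6')

lemma c1: "x\<in>carrier G \<Longrightarrow> y\<in>carrier G \<Longrightarrow> x \<otimes> (y \<otimes> inv x) = y"
proof -
  assume c: "x\<in>carrier G" "y\<in>carrier G"
  then show ?thesis using m_lcomm[of x y "inv x"] by simp
qed
lemma c2: "x\<in>carrier G \<Longrightarrow> y\<in>carrier G \<Longrightarrow> z\<in>carrier G \<Longrightarrow> x \<otimes> (y \<otimes> (z \<otimes> inv x)) = y \<otimes> z"
proof -
  assume c: "x\<in>carrier G" "y\<in>carrier G" "z\<in>carrier G"
  then show ?thesis using m_lcomm[of x y "z \<otimes> inv x"] c1[of x z] by simp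
qed
lemma id2: "x\<in>carrier G \<Longrightarrow> a\<in>carrier G \<Longrightarrow> y\<in>carrier G \<Longrightarrow> h\<in>carrier G \<Longrightarrow> h'\<in>carrier G \<Longrightarrow>
   inv (h \<otimes> x) \<otimes> (h' \<otimes> y) = (inv h \<otimes> h') \<otimes> a \<otimes> inv (x \<otimes> a \<otimes> inv y)"
proof -
  assume c: "x\<in>carrier G" "a\<in>carrier G" "y\<in>carrier G" "h\<in>carrier G" "h'\<in>carrier G"
  have "inv (x \<otimes> a \<otimes> inv y) = y \<otimes> inv x \<otimes> inv a" using c by (simp add: inv_mult m_ac)
  then have "(inv h \<otimes> h') \<otimes> a \<otimes> inv (x \<otimes> a \<otimes> inv y) = (inv h \<otimes> h') \<otimes> (a \<otimes> (y \<otimes> inv x \<otimes> inv a))"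
    using c by (simp add: m_assoc)
  also have "a \<otimes> (y \<otimes> inv x \<otimes> inv a) = y \<otimes> inv x" using c by (simp add: c1)
  finally show ?thesis using c by (simp add: inv_mult m_ac)
qed

lemma id3: "k \<in> carrier G \<Longrightarrow> z \<in> carrier G \<Longrightarrow> inv (k \<otimes> inv z) \<otimes> k = z"
  by (intro inv_eqI) (auto simp: m_assoc)

lemma id4: "g \<in> carrier G \<Longrightarrow> h \<in> carrier G \<Longrightarrow> g \<otimes> inv (h \<otimes> g) = inv h"
  by (simp add: inv_mult_group m_assoc[symmetric])

lemma id5: "h1 \<in> carrier G \<Longrightarrow> h2 \<in> carrier G \<Longrightarrow> g \<in> carrier G \<Longrightarrow> a \<in> carrier G \<Longrightarrow>
  (h1 \<otimes> g) \<otimes> a \<otimes> inv (h2 \<otimes> (g \<otimes> a)) = h1 \<otimes> inv h2"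
  by (simp add: m_assoc inv_mult_group id6)



lemma split_main:
  assumes sub: "subgroup H G" and cnt: "countable (carrier G)"
    and sec: "\<forall>q\<in>rcosets H. s q \<in> q"
    and coc: "\<forall>a\<in>carrier G. finite ((\<lambda>g. s (H #> g) \<otimes> a \<otimes> inv (s (H #> (g \<otimes> a)))) ` carrier G)"
  shows "coarsely_split (G\<lparr>carrier := H\<rparr>) G (G Mod H) (\<lambda>h. h) (\<lambda>g. H #> g)
      \<and> coarsely_equivalent_groups G (G\<lparr>carrier := H\<rparr> \<times>\<times> (G Mod H))"
proof -
  have nor: "H \<lhd> G" using sub by (rule subgroup_imp_normal)
  interpret N: normal H G by (rule nor)
  let ?K = "G\<lparr>carrier := H\<rparr>"
  let ?Q = "G Mod H"
  have gK: "group ?K" using sub is_group by (rule subgroup.subgroup_is_group)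
  have gQ: "group ?Q" by (rule N.factorgroup_is_group)
  interpret Q: group ?Q by (rule gQ)
  have Hc: "H \<subseteq> carrier G" using sub by (rule subgroup.subset)
  have cQ: "carrier ?Q = rcosets H" by (simp add: FactGroup_def)
  have cntH: "countable H" using cnt Hc countable_subset by blast
  have cntQ: "countable (rcosets H)"
  proof -
    have "rcosets H = (\<lambda>x. H #> x) ` carrier G" by (auto simp: RCOSETS_def)
    then show ?thesis using cnt by simp
  qed
  obtain dK where "proper_li_metric ?K dK" using group.countable_proper_li_metric[OF gK] cntH by auto
  then obtain NK where NK: "proper_norm ?K NK" "\<forall>g\<in>H. \<forall>h\<in>H. dK g h = NK (inv g \<otimes> h)"
    and mK: "proper_li_metric ?K dK"
    unfolding proper_li_metric_def using m_inv_consistent[OF sub] by auto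
  obtain dG where "proper_li_metric G dG" using countable_proper_li_metric cnt by auto
  then obtain NG where NG: "proper_norm G NG" "\<forall>g\<in>carrier G. \<forall>h\<in>carrier G. dG g h = NG (inv g \<otimes> h)"
    and mG: "proper_li_metric G dG"
    unfolding proper_li_metric_def by auto
  obtain dQ where "proper_li_metric ?Q dQ" using group.countable_proper_li_metric[OF gQ] cntQ cQ by auto
  then obtain NQ where NQ: "proper_norm ?Q NQ" "\<forall>g\<in>rcosets H. \<forall>h\<in>rcosets H. dQ g h = NQ (inv\<^bsub>?Q\<^esub> g <#> h)"
    and mQ: "proper_li_metric ?Q dQ"
    unfolding proper_li_metric_def using cQ by auto
  have NKpos: "\<And>k. k \<in> H \<Longrightarrow> NK k \<ge> 0" and NK1: "NK \<one> = 0"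
    and NKfin: "\<And>R. R > 0 \<Longrightarrow> finite {k \<in> H. NK k \<le> R}"
    using proper_normD[OF NK(1)] by auto
  have NGpos: "\<And>k. k \<in> carrier G \<Longrightarrow> NG k \<ge> 0" and NG1: "NG \<one> = 0"
    and NGfin: "\<And>R. R > 0 \<Longrightarrow> finite {k \<in> carrier G. NG k \<le> R}"
    using proper_normD[OF NG(1)] by auto
  have NQpos: "\<And>k. k \<in> rcosets H \<Longrightarrow> NQ k \<ge> 0"
    and NQfin: "\<And>R. R > 0 \<Longrightarrow> finite {k \<in> rcosets H. NQ k \<le> R}"
    using proper_normD[OF NQ(1)] cQ by auto
  have NQ1: "NQ H = 0" using pn_zero[OF NQ(1), of "\<one>\<^bsub>?Q\<^esub>"] Q.one_closed by simp
  have rI: "\<And>x. x \<in> carrier G \<Longrightarrow> H #> x \<in> rcosets H" using Hc by (rule rcosetsI)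
  have HQ: "H \<in> rcosets H" using rI[of \<one>] coset_mult_one[OF Hc] by simp
  have Qmc: "\<And>q q'. q \<in> rcosets H \<Longrightarrow> q' \<in> rcosets H \<Longrightarrow> q <#> q' \<in> rcosets H"
  proof -
    fix q q' assume "q \<in> rcosets H" "q' \<in> rcosets H"
    then show "q <#> q' \<in> rcosets H" using Q.m_closed[of q q'] cQ by simp
  qed
  have Qic: "\<And>q. q \<in> rcosets H \<Longrightarrow> inv\<^bsub>?Q\<^esub> q \<in> rcosets H"
  proof -
    fix q assume "q \<in> rcosets H"
    then show "inv\<^bsub>?Q\<^esub> q \<in> rcosets H" using Q.inv_closed[of q] cQ by simp
  qed
  have Qli: "\<And>q. q \<in> rcosets H \<Longrightarrow> inv\<^bsub>?Q\<^esub> q <#> q = H"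
  proof -
    fix q assume "q \<in> rcosets H"
    then show "inv\<^bsub>?Q\<^esub> q <#> q = H" using Q.l_inv[of q] cQ by simp
  qed
  have Qcan: "\<And>q q'. q \<in> rcosets H \<Longrightarrow> q' \<in> rcosets H \<Longrightarrow> q <#> (inv\<^bsub>?Q\<^esub> q <#> q') = q'"
  proof -
    fix q q' assume q: "q \<in> rcosets H" and q': "q' \<in> rcosets H"
    have "q \<otimes>\<^bsub>?Q\<^esub> (inv\<^bsub>?Q\<^esub> q \<otimes>\<^bsub>?Q\<^esub> q') = q'"
    proof -
      have qQ: "q \<in> carrier ?Q" and q'Q: "q' \<in> carrier ?Q" using q q' cQ by auto
      show ?thesis
        by (simp only: Q.m_assoc[OF qQ Q.inv_closed[OF qQ] q'Q, symmetric] Q.r_inv[OF qQ] Q.l_one[OF q'Q])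
    qed
    then show "q <#> (inv\<^bsub>?Q\<^esub> q <#> q') = q'" by simp
  qed
  have smem: "\<And>g. g \<in> carrier G \<Longrightarrow> s (H #> g) \<in> H #> g" using sec rI by blast
  have sform: "\<And>g. g \<in> carrier G \<Longrightarrow> \<exists>h\<in>H. s (H #> g) = h \<otimes> g"
    using smem unfolding r_coset_def by blast
  have scarr: "\<And>g. g \<in> carrier G \<Longrightarrow> s (H #> g) \<in> carrier G"
  proof -
    fix g assume g: "g \<in> carrier G"
    then obtain h where "h \<in> H" "s (H #> g) = h \<otimes> g" using sform by blast
    then show "s (H #> g) \<in> carrier G" using g Hc by auto
  qed
  have qrep: "\<And>q z. q \<in> rcosets H \<Longrightarrow> z \<in> q \<Longrightarrow> q = H #> z"
  proof -
    fix q z assume q: "q \<in> rcosets H" and z: "z \<in> q"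
    then obtain x where x: "x \<in> carrier G" "q = H #> x" unfolding RCOSETS_def by auto
    then show "q = H #> z" using repr_independence[of z H x] z sub by simp
  qed
  have sq: "\<And>q. q \<in> rcosets H \<Longrightarrow> q = H #> s q" by (rule qrep[OF _ bspec[OF sec]])
  have sqc: "\<And>q. q \<in> rcosets H \<Longrightarrow> s q \<in> carrier G"
  proof -
    fix q assume q: "q \<in> rcosets H"
    then show "s q \<in> carrier G" using N.rcosets_carrier[OF is_group q] bspec[OF sec q] by blast
  qed
  have rconst: "\<And>h x. h \<in> H \<Longrightarrow> x \<in> carrier G \<Longrightarrow> H #> (h \<otimes> x) = H #> x"
  proof -
    fix h x assume h: "h \<in> H" and x: "x \<in> carrier G"
    show "H #> (h \<otimes> x) = H #> x" using repr_independence[OF rcosI[OF h Hc x] x sub] by simp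
  qed
  have Qinv: "\<And>x. x \<in> carrier G \<Longrightarrow> inv\<^bsub>?Q\<^esub> (H #> x) = H #> inv x"
  proof -
    fix x assume x: "x \<in> carrier G"
    have "(H #> inv x) <#> (H #> x) = H" using x N.rcos_sum[of "inv x" x] sub
      by (simp add: coset_mult_one Hc)
    then show "inv\<^bsub>?Q\<^esub> (H #> x) = H #> inv x"
      using Q.inv_equality[of "H #> inv x" "H #> x"] x rI cQ by simp
  qed
  define C where "C a = (\<lambda>g. s (H #> g) \<otimes> a \<otimes> inv (s (H #> (g \<otimes> a)))) ` carrier G" for a
  have Cfin: "\<And>a. a \<in> carrier G \<Longrightarrow> finite (C a)" using coc unfolding C_def by blast
  have CH: "\<And>a. a \<in> carrier G \<Longrightarrow> C a \<subseteq> H"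
  proof
    fix a c assume a: "a \<in> carrier G" and "c \<in> C a"
    then obtain g where g: "g \<in> carrier G" "c = s (H #> g) \<otimes> a \<otimes> inv (s (H #> (g \<otimes> a)))"
      unfolding C_def by auto
    obtain h1 where h1: "h1 \<in> H" "s (H #> g) = h1 \<otimes> g" using sform g by blast
    obtain h2 where h2: "h2 \<in> H" "s (H #> (g \<otimes> a)) = h2 \<otimes> (g \<otimes> a)" using sform g a by blast
    have "c = h1 \<otimes> inv h2" using g h1 h2 id5[of h1 h2 g a] Hc a by auto
    then show "c \<in> H" using h1 h2 sub by (simp add: subgroup.m_closed subgroup.m_inv_closed)
  qed
  define f where "f g = (g \<otimes> inv (s (H #> g)), H #> g)" for g
  define F where "F p = fst p \<otimes> s (snd p)" for p
  have fH: "\<And>g. g \<in> carrier G \<Longrightarrow> g \<otimes> inv (s (H #> g)) \<in> H"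
  proof -
    fix g assume g: "g \<in> carrier G"
    obtain h where h: "h \<in> H" "s (H #> g) = h \<otimes> g" using sform g by blast
    then show "g \<otimes> inv (s (H #> g)) \<in> H" using id4[of g h] g Hc sub
      by (auto simp: subgroup.m_inv_closed)
  qed
  have fmap: "coarse_map (carrier G) dG (H \<times> rcosets H) (sum_metric dK dQ) f"
    unfolding coarse_map_def
  proof (intro conjI ballI allI impI)
    fix x assume "x \<in> carrier G" then show "f x \<in> H \<times> rcosets H" using fH rI by (simp add: f_def)
  next
    fix \<delta> :: real assume d: "\<delta> > 0"
    define B where "B = {b \<in> carrier G. NG b \<le> \<delta>}"
    have finB: "finite B" using NGfin d by (simp add: B_def)
    define W1 where "W1 = (\<Union>b\<in>B. C b)"
    define V where "V = (\<lambda>b. H #> b) ` B"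
    have finW1: "finite W1" using finB Cfin by (auto simp: W1_def B_def)
    have W1H: "W1 \<subseteq> H" using CH by (auto simp: W1_def B_def)
    have finV: "finite V" using finB by (simp add: V_def)
    have VQ: "V \<subseteq> rcosets H" using rI by (auto simp: V_def B_def)
    show "\<exists>eps>0. \<forall>x\<in>carrier G. \<forall>y\<in>carrier G. dG x y \<le> \<delta> \<longrightarrow> sum_metric dK dQ (f x) (f y) \<le> eps"
    proof (intro exI[of _ "sum NK W1 + sum NQ V + 1"] conjI ballI impI)
      have "sum NK W1 \<ge> 0" using NKpos W1H by (intro sum_nonneg) auto
      moreover have "sum NQ V \<ge> 0" using NQpos VQ by (intro sum_nonneg) auto
      ultimately show "sum NK W1 + sum NQ V + 1 > 0" by linarith
    next
      fix x y assume x: "x \<in> carrier G" and y: "y \<in> carrier G" and dxy: "dG x y \<le> \<delta>"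
      define b where "b = inv x \<otimes> y"
      have bc: "b \<in> carrier G" using x y by (simp add: b_def)
      have bB: "b \<in> B" using NG(2) x y dxy bc by (simp add: B_def b_def)
      have yb: "y = x \<otimes> b" using x y by (simp add: b_def id6)
      have e1: "dK (x \<otimes> inv (s (H #> x))) (y \<otimes> inv (s (H #> y))) = NK (s (H #> x) \<otimes> b \<otimes> inv (s (H #> (x \<otimes> b))))"
        using NK(2) fH x y id1[of x b "s (H #> x)" "s (H #> y)"] bc scarr yb by simp
      have cW: "s (H #> x) \<otimes> b \<otimes> inv (s (H #> (x \<otimes> b))) \<in> W1"
        using bB x unfolding W1_def C_def by blast
      have e2: "dQ (H #> x) (H #> y) = NQ (H #> b)"
        using NQ(2) rI x y Qinv N.rcos_sum[of "inv x" y] by (simp add: b_def)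
      have bV: "H #> b \<in> V" using bB by (simp add: V_def)
      have "NK (s (H #> x) \<otimes> b \<otimes> inv (s (H #> (x \<otimes> b)))) \<le> sum NK W1"
        using le_sum_fin[OF finW1 _ cW, of NK] NKpos W1H by blast
      moreover have "NQ (H #> b) \<le> sum NQ V"
        using le_sum_fin[OF finV _ bV, of NQ] NQpos VQ by blast
      ultimately show "sum_metric dK dQ (f x) (f y) \<le> sum NK W1 + sum NQ V + 1"
        using e1 e2 by (simp add: sum_metric_def f_def)
    qed
  qed
  have Fmap: "coarse_map (H \<times> rcosets H) (sum_metric dK dQ) (carrier G) dG F"
    unfolding coarse_map_def
  proof (intro conjI ballI allI impI)
    fix p assume "p \<in> H \<times> rcosets H" then show "F p \<in> carrier G"
      using sqc Hc by (auto simp: F_def)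
  next
    fix \<delta> :: real assume d: "\<delta> > 0"
    define BK where "BK = {k \<in> H. NK k \<le> \<delta>}"
    define BQ where "BQ = {k \<in> rcosets H. NQ k \<le> \<delta>}"
    define W2 where "W2 = (\<Union>k\<in>BK. \<Union>p\<in>BQ. (\<lambda>c. k \<otimes> s p \<otimes> inv c) ` C (s p))"
    have finW2: "finite W2" unfolding W2_def
      using NKfin[OF d] NQfin[OF d] Cfin sqc by (auto simp: BK_def BQ_def)
    have W2c: "W2 \<subseteq> carrier G" unfolding W2_def
    proof (rule subsetI)
      fix w assume "w \<in> (\<Union>k\<in>BK. \<Union>p\<in>BQ. (\<lambda>c. k \<otimes> s p \<otimes> inv c) ` C (s p))"
      then obtain k p c where "k \<in> BK" "p \<in> BQ" "c \<in> C (s p)" "w = k \<otimes> s p \<otimes> inv c" by blast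
      moreover have "s p \<in> carrier G" using sqc \<open>p \<in> BQ\<close> by (auto simp: BQ_def)
      moreover have "c \<in> carrier G" using CH[OF \<open>s p \<in> carrier G\<close>] \<open>c \<in> C (s p)\<close> Hc by blast
      moreover have "k \<in> carrier G" using \<open>k \<in> BK\<close> Hc by (auto simp: BK_def)
      ultimately show "w \<in> carrier G" by simp
    qed
    show "\<exists>eps>0. \<forall>x\<in>H \<times> rcosets H. \<forall>y\<in>H \<times> rcosets H. sum_metric dK dQ x y \<le> \<delta> \<longrightarrow> dG (F x) (F y) \<le> eps"
    proof (intro exI[of _ "sum NG W2 + 1"] conjI ballI impI)
      have "sum NG W2 \<ge> 0" using NGpos W2c by (intro sum_nonneg) auto
      then show "sum NG W2 + 1 > 0" by linarith
    next
      fix p p' assume p: "p \<in> H \<times> rcosets H" and p': "p' \<in> H \<times> rcosets H"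
        and dpp: "sum_metric dK dQ p p' \<le> \<delta>"
      obtain h q where hq: "p = (h, q)" "h \<in> H" "q \<in> rcosets H" using p by auto
      obtain h' q' where hq': "p' = (h', q')" "h' \<in> H" "q' \<in> rcosets H" using p' by auto
      have hc: "h \<in> carrier G" "h' \<in> carrier G" using hq hq' Hc by auto
      define k where "k = inv h \<otimes> h'"
      define pp where "pp = inv\<^bsub>?Q\<^esub> q <#> q'"
      have kH: "k \<in> H" using hq hq' sub by (simp add: k_def subgroup.m_closed subgroup.m_inv_closed)
      have ppQ: "pp \<in> rcosets H" using hq hq' cQ unfolding pp_def
        using Qmc Qic by blast
      have dK0: "dK h h' \<ge> 0" using NK(2) hq hq' NKpos kH by (simp add: k_def)
      have dQ0: "dQ q q' \<ge> 0" using NQ(2) hq hq' NQpos ppQ by (simp add: pp_def)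
      have kB: "k \<in> BK" using dpp dK0 dQ0 NK(2) hq hq' kH unfolding BK_def sum_metric_def k_def by simp
      have ppB: "pp \<in> BQ" using dpp dK0 dQ0 NQ(2) hq hq' ppQ unfolding BQ_def sum_metric_def pp_def by simp
      define x where "x = s q"
      define a where "a = s pp"
      have xc: "x \<in> carrier G" and ac: "a \<in> carrier G" using sqc hq ppQ by (auto simp: x_def a_def)
      have qx: "q = H #> x" using sq hq by (simp add: x_def)
      have ppa: "pp = H #> a" using sq ppQ by (simp add: a_def)
      have "q' = q <#> pp"
        using Qcan[OF hq(3) hq'(3)] unfolding pp_def by simp
      also have "q <#> pp = (H #> x) <#> (H #> a)" using qx ppa by simp
      also have "\<dots> = H #> (x \<otimes> a)" by (rule N.rcos_sum[OF xc ac])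
      finally have q'xa: "q' = H #> (x \<otimes> a)" .
      define c where "c = x \<otimes> a \<otimes> inv (s q')"
      have "s (H #> x) = s q" using qx by simp
      then have e1: "s (H #> x) = x" by (simp add: x_def)
      have "c = s (H #> x) \<otimes> a \<otimes> inv (s (H #> (x \<otimes> a)))" using e1 q'xa c_def by simp
      then have cC: "c \<in> C a" unfolding C_def using xc by blast
      have yc: "s q' \<in> carrier G" using sqc hq' by auto
      have Fp: "F p = h \<otimes> x" using hq(1) by (simp add: F_def x_def)
      have Fp': "F p' = h' \<otimes> s q'" using hq'(1) by (simp add: F_def)
      have "dG (F p) (F p') = NG (inv (h \<otimes> x) \<otimes> (h' \<otimes> s q'))"
        unfolding Fp Fp' using NG(2) hc xc yc by simp
      also have "inv (h \<otimes> x) \<otimes> (h' \<otimes> s q') = k \<otimes> a \<otimes> inv c"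
        unfolding k_def c_def by (rule id2[OF xc ac yc hc(1) hc(2)])
      finally have "dG (F p) (F p') = NG (k \<otimes> a \<otimes> inv c)" .
      moreover have mem: "k \<otimes> a \<otimes> inv c \<in> W2" unfolding W2_def
        by (rule UN_I[OF kB], rule UN_I[OF ppB], rule image_eqI[of _ _ c]) (simp_all add: a_def cC[unfolded a_def])
      moreover have nn: "\<And>w. w \<in> W2 \<Longrightarrow> NG w \<ge> 0" using NGpos W2c by blast
      ultimately show "dG (F p) (F p') \<le> sum NG W2 + 1"
        using le_sum_fin[of W2 NG, OF finW2 nn mem] by linarith
    qed
  qed
  have ceq: "coarse_equiv (carrier G) dG (H \<times> rcosets H) (sum_metric dK dQ) f"
    unfolding coarse_equiv_def
  proof (intro conjI fmap exI[of _ F] exI[of _ 0] Fmap ballI)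
    fix g assume g: "g \<in> carrier G"
    have "F (f g) = g" using g scarr by (simp add: F_def f_def m_assoc)
    then show "dG (F (f g)) g \<le> 0" using NG(2) g NG1 by simp
  next
    fix p assume p: "p \<in> H \<times> rcosets H"
    obtain h q where hq: "p = (h, q)" "h \<in> H" "q \<in> rcosets H" using p by auto
    have hc: "h \<in> carrier G" using hq Hc by auto
    have "H #> (h \<otimes> s q) = q" using rconst[OF hq(2) sqc[OF hq(3)]] sq[OF hq(3)] by simp
    then have "f (F p) = p" using hq hc sqc[OF hq(3)] by (simp add: F_def f_def m_assoc)
    then show "sum_metric dK dQ (f (F p)) p \<le> 0"
      using NK(2) NQ(2) hq NK1 NQ1 Qli[OF hq(3)] by (simp add: sum_metric_def)
  qed
  have ceq': "coarse_equiv (carrier G) dG (carrier ?K \<times> carrier ?Q) (sum_metric dK dQ) f"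
    using ceq cQ by simp
  have sH: "s H \<in> H" using sec HQ by blast
  have b1: "\<exists>C. \<forall>k\<in>carrier ?K. sum_metric dK dQ (f k) (k, \<one>\<^bsub>?Q\<^esub>) \<le> C"
    proof (intro exI[of _ "NK (s H)"] ballI)
      fix k assume "k \<in> carrier ?K"
      then have k: "k \<in> H" by simp
      have kc: "k \<in> carrier G" using k Hc by auto
      have Hk: "H #> k = H" using subgroup.rcos_const[OF sub is_group k] .
      have sHc: "s H \<in> carrier G" using sH Hc by auto
      have "dK (k \<otimes> inv (s H)) k = NK (s H)" using NK(2) k fH[OF kc] Hk id3[OF kc sHc] by simp
      moreover have "dQ H H = 0" using NQ(2) NQ1 HQ Qli[OF HQ] by simp
      ultimately show "sum_metric dK dQ (f k) (k, \<one>\<^bsub>?Q\<^esub>) \<le> NK (s H)"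
        using Hk by (simp add: sum_metric_def f_def)
    qed
  have b2: "\<exists>C. \<forall>g\<in>carrier G. dQ (snd (f g)) (H #> g) \<le> C"
    proof (intro exI[of _ 0] ballI)
      fix g assume g: "g \<in> carrier G"
      show "dQ (snd (f g)) (H #> g) \<le> 0" using NQ(2) rI[OF g] NQ1 Qli[OF rI[OF g]]
        by (simp add: f_def)
    qed
  have part1: "coarsely_split ?K G ?Q (\<lambda>h. h) (\<lambda>g. H #> g)"
    unfolding coarsely_split_def using mK mG mQ ceq' b1 b2 by blast
  have part2: "coarsely_equivalent_groups G (?K \<times>\<times> ?Q)"
    unfolding coarsely_equivalent_groups_def
    using mG DirProd_proper_li_metric[OF gK gQ mK mQ] ceq cQ by auto
  show ?thesis using part1 part2 by blast
qed

end



definition Pf :: "('a,'b) monoid_scheme \<Rightarrow> 'a set \<Rightarrow> ('a \<Rightarrow> int) \<Rightarrow> 'a" where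
  "Pf G S n = finprod G (\<lambda>x. x [^]\<^bsub>G\<^esub> n x) S"

locale rk_setup = comm_group G for G (structure) +
  fixes S
  assumes maxl: "maximal_indep_inf_order G S" and fr: "finite_rational_rank G"
begin

abbreviation "H \<equiv> generate G S"
abbreviation "P \<equiv> Pf G S"

lemma indS: "independent_set G S" and infS: "\<And>x. x \<in> S \<Longrightarrow> infinite_order G x"
  using maxl unfolding maximal_indep_inf_order_def indep_inf_order_def by auto

lemma Sc: "S \<subseteq> carrier G" using indS unfolding independent_set_def by auto

lemma oneS: "\<one> \<notin> S" using indS unfolding independent_set_def by auto

lemma indS_rule: "F \<subseteq> S \<Longrightarrow> finite F \<Longrightarrow> finprod G (\<lambda>x. x [^] (n x :: int)) F = \<one> \<Longrightarrow> x \<in> F \<Longrightarrow> x [^] (n x) = \<one>"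
  using indS unfolding independent_set_def by blast

lemma Sfin: "finite S"
proof (rule ccontr)
  assume inf: "infinite S"
  obtain r :: nat where r: "\<And>T. finite T \<Longrightarrow> indep_inf_order G T \<Longrightarrow> card T \<le> r"
    using fr unfolding finite_rational_rank_def by blast
  obtain T where T: "T \<subseteq> S" "finite T" "card T = Suc r"
    using infinite_arbitrarily_large[OF inf] by blast
  have "indep_inf_order G T"
    unfolding indep_inf_order_def independent_set_def
    using T Sc oneS indS_rule infS by blast
  then show False using r[OF T(2)] T(3) by simp
qed

lemma pow_Pi: "(\<lambda>x. x [^] (n x :: int)) \<in> A \<rightarrow> carrier G" if "A \<subseteq> carrier G"
  using that by auto

lemma P_closed: "P n \<in> carrier G"
  unfolding Pf_def by (rule finprod_closed[OF pow_Pi[OF Sc]])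

lemma P_mult: "P n \<otimes> P m = P (\<lambda>x. n x + m x)"
proof -
  have "P (\<lambda>x. n x + m x) = finprod G (\<lambda>x. x [^] n x \<otimes> x [^] m x) S"
    unfolding Pf_def using Sc by (intro finprod_cong') (auto simp: int_pow_mult)
  also have "\<dots> = P n \<otimes> P m" unfolding Pf_def
    by (rule finprod_multf[OF pow_Pi[OF Sc] pow_Pi[OF Sc]])
  finally show ?thesis by simp
qed

lemma P_zero: "P (\<lambda>x. 0) = \<one>"
  unfolding Pf_def by simp

lemma P_cong: "(\<And>x. x \<in> S \<Longrightarrow> n x = m x) \<Longrightarrow> P n = P m"
  unfolding Pf_def using Sc by (intro finprod_cong') auto

lemma P_pow: "P n [^] (k::nat) = P (\<lambda>x. int k * n x)"
proof (induction k)
  case 0 then show ?case using P_zero by simp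
next
  case (Suc k)
  have "P n [^] Suc k = P n [^] k \<otimes> P n" by simp
  also have "\<dots> = P (\<lambda>x. int k * n x + n x)" using Suc P_mult by simp
  also have "\<dots> = P (\<lambda>x. int (Suc k) * n x)" by (rule P_cong) (simp add: algebra_simps)
  finally show ?case .
qed

lemma P_uniq: assumes "P n = P m" "x \<in> S" shows "n x = m x"
proof -
  have "P m \<otimes> P (\<lambda>x. n x - m x) = P n" using P_mult[of m "\<lambda>x. n x - m x"] by simp
  then have "inv (P m) \<otimes> (P m \<otimes> P (\<lambda>x. n x - m x)) = inv (P m) \<otimes> P m" using assms(1) by simp
  then have "P (\<lambda>x. n x - m x) = \<one>" using id6'[OF P_closed P_closed] P_closed by simp
  then have "x [^] (n x - m x) = \<one>" using indS_rule[of S "\<lambda>x. n x - m x" x] Sfin assms(2)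
    unfolding Pf_def by blast
  then show ?thesis using infS[OF assms(2)] unfolding infinite_order_def by auto
qed

lemma subH: "subgroup H G" using generate_is_subgroup[OF Sc] .

lemma fin_in_H: "finite A \<Longrightarrow> A \<subseteq> S \<Longrightarrow> finprod G (\<lambda>x. x [^] (n x::int)) A \<in> H"
proof (induction A rule: finite_induct)
  case empty then show ?case by (simp add: generate.one)
next
  case (insert y F)
  have yc: "y \<in> carrier G" using insert Sc by auto
  have Fc: "F \<subseteq> carrier G" using insert Sc by auto
  have "finprod G (\<lambda>x. x [^] n x) (insert y F) = y [^] n y \<otimes> finprod G (\<lambda>x. x [^] n x) F"
    using insert yc pow_Pi[OF Fc] by (intro finprod_insert) auto
  moreover have "y [^] n y \<in> H"
    using subgroup_int_pow_closed[OF subH generate.incl[of y S G]] insert by auto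
  ultimately show ?case using insert generate.eng by auto
qed

lemma P_in_H: "P n \<in> H" unfolding Pf_def by (rule fin_in_H[OF Sfin subset_refl])

lemma H_P: "h \<in> H \<Longrightarrow> \<exists>n. h = P n"
proof (induction h rule: generate.induct)
  case one
  have "\<one> = P (\<lambda>x. 0)" using P_zero by simp
  then show ?case by blast
next
  case (incl h)
  have hc: "h \<in> carrier G" using incl Sc by auto
  have "P (\<lambda>y. if y = h then 1 else 0) = finprod G (\<lambda>j. if h = j then j else \<one>) S"
    unfolding Pf_def using Sc by (intro finprod_cong') auto
  also have "\<dots> = h" using finprod_singleton[of h S "\<lambda>j. j"] incl Sfin Sc by auto
  finally have "h = P (\<lambda>y. if y = h then 1 else 0)" by simp
  then show ?case by blast
next
  case (inv h)
  have hc: "h \<in> carrier G" using inv Sc by auto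
  have "P (\<lambda>y. if y = h then -1 else 0) = finprod G (\<lambda>j. if h = j then inv j else \<one>) S"
    unfolding Pf_def using Sc by (intro finprod_cong') (auto simp: int_pow_neg)
  also have "\<dots> = inv h" using finprod_singleton[of h S "\<lambda>j. inv j"] inv Sfin Sc by auto
  finally have "inv h = P (\<lambda>y. if y = h then -1 else 0)" by simp
  then show ?case by blast
next
  case (eng h1 h2)
  then obtain n1 n2 where "h1 = P n1" "h2 = P n2" by blast
  then have "h1 \<otimes> h2 = P (\<lambda>x. n1 x + n2 x)" using P_mult by simp
  then show ?case by blast
qed

lemma torsion: assumes g: "g \<in> carrier G" shows "\<exists>m::nat. 0 < m \<and> g [^] m \<in> H"
proof (cases "infinite_order G g")
  case False
  then obtain n :: int where n: "g [^] n = \<one>" "n \<noteq> 0" using g unfolding infinite_order_def by auto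
  show ?thesis
  proof (cases "n > 0")
    case True
    then have "g [^] (nat n) = \<one>" using n pow_nat[of n G g] by simp
    then show ?thesis using True generate.one[of G S] by (intro exI[of _ "nat n"]) auto
  next
    case False
    then have "g [^] (- n) = \<one>" using n g int_pow_neg[OF g, of n] by simp
    then have "g [^] (nat (- n)) = \<one>" using False pow_nat[of "-n" G g] by simp
    then show ?thesis using False n generate.one[of G S] by (intro exI[of _ "nat (-n)"]) auto
  qed
next
  case True
  show ?thesis
  proof (cases "g \<in> S")
    case True
    then have "g [^] (1::nat) \<in> H" using generate.incl[of g S G] g by simp
    then show ?thesis by (intro exI[of _ 1]) simp
  next
    case gS: False
    have g1: "g \<noteq> \<one>"
    proof
      assume "g = \<one>"
      then have "g [^] (1::int) = \<one>" by simp
      then have "(1::int) = 0" using True unfolding infinite_order_def by blast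
      then show False by simp
    qed
    have "\<not> indep_inf_order G (insert g S)" using maxl gS unfolding maximal_indep_inf_order_def by blast
    moreover have "\<forall>x\<in>insert g S. infinite_order G x" using True infS by blast
    ultimately have "\<not> independent_set G (insert g S)" unfolding indep_inf_order_def by blast
    moreover have "insert g S \<subseteq> carrier G" "\<one> \<notin> insert g S" using g Sc oneS g1 by auto
    ultimately obtain F n where F: "F \<subseteq> insert g S" "finite F"
       "finprod G (\<lambda>x. x [^] (n x::int)) F = \<one>" "\<exists>x\<in>F. x [^] (n x) \<noteq> \<one>"
      unfolding independent_set_def by blast
    have Fc: "F - {g} \<subseteq> carrier G" using F Sc by auto
    have FS: "F - {g} \<subseteq> S" using F by auto
    have gF: "g \<in> F"
    proof (rule ccontr)
      assume "g \<notin> F"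
      then have "F \<subseteq> S" using F by auto
      then show False using indS_rule[of F n] F by blast
    qed
    have split: "finprod G (\<lambda>x. x [^] n x) F = g [^] n g \<otimes> finprod G (\<lambda>x. x [^] n x) (F - {g})"
    proof -
      have "F = insert g (F - {g})" using gF by auto
      then have "finprod G (\<lambda>x. x [^] n x) F = finprod G (\<lambda>x. x [^] n x) (insert g (F - {g}))" by simp
      also have "\<dots> = g [^] n g \<otimes> finprod G (\<lambda>x. x [^] n x) (F - {g})"
        using F g pow_Pi[OF Fc] by (intro finprod_insert) auto
      finally show ?thesis .
    qed
    define R where "R = finprod G (\<lambda>x. x [^] n x) (F - {g})"
    have finF: "finite (F - {g})" using F(2) by (rule finite_Diff)
    have RH: "R \<in> H" unfolding R_def by (rule fin_in_H[OF finF FS])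
    have Rc: "R \<in> carrier G" by (rule subgroup.mem_carrier[OF subH RH])
    have eq: "g [^] n g \<otimes> R = \<one>" using split F(3) by (simp add: R_def)
    have ng: "g [^] n g \<noteq> \<one>"
    proof
      assume a: "g [^] n g = \<one>"
      then have "R = \<one>" using eq Rc by simp
      then have "\<forall>x\<in>F - {g}. x [^] n x = \<one>" using indS_rule[OF FS] F unfolding R_def by blast
      then show False using F(4) a by blast
    qed
    then have n0: "n g \<noteq> 0" by auto
    have "inv R = g [^] n g" by (rule inv_equality[OF eq Rc]) (simp add: g)
    then have gn: "g [^] n g = inv R" by simp
    have gnH: "g [^] n g \<in> H" using gn RH subH by (simp add: subgroup.m_inv_closed)
    show ?thesis
    proof (cases "n g > 0")
      case True
      then show ?thesis using gnH pow_nat[of "n g" G g] by (intro exI[of _ "nat (n g)"]) auto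
    next
      case False
      have "g [^] (- n g) = inv (g [^] n g)" using int_pow_neg[OF g] by simp
      then have "g [^] (- n g) \<in> H" using gnH subH by (simp add: subgroup.m_inv_closed)
      then show ?thesis using False n0 pow_nat[of "- n g" G g] by (intro exI[of _ "nat (- n g)"]) auto
    qed
  qed
qed

end



lemma lt_floor_add_one: "(x::real) < of_int \<lfloor>x\<rfloor> + 1"
  using floor_le_iff[of x "\<lfloor>x\<rfloor>"] by simp

context rk_setup begin

definition ordH where "ordH g = (LEAST m::nat. 0 < m \<and> g [^] m \<in> H)"
definition coefH where "coefH h = (SOME n. h = P n)"
definition phi where "phi g x = real_of_int (coefH (g [^] ordH g) x) / real (ordH g)"

lemma ordH: "g \<in> carrier G \<Longrightarrow> 0 < ordH g \<and> g [^] ordH g \<in> H"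
  unfolding ordH_def by (rule LeastI_ex[OF torsion])

lemma coefH: "h \<in> H \<Longrightarrow> h = P (coefH h)"
  unfolding coefH_def by (rule someI_ex[OF H_P])

lemma phi_K:
  assumes g: "g \<in> carrier G" and m: "0 < m" and gm: "g [^] (m::nat) = P n" and x: "x \<in> S"
  shows "phi g x = real_of_int (n x) / real m"
proof -
  define m0 where "m0 = ordH g"
  define n0 where "n0 = coefH (g [^] m0)"
  have m0: "0 < m0" and gm0: "g [^] m0 = P n0"
    using ordH[OF g] coefH[of "g [^] m0"] unfolding m0_def n0_def by auto
  have "P n [^] m0 = g [^] (m * m0)" using gm nat_pow_pow[OF g, of m m0] by simp
  also have "\<dots> = g [^] (m0 * m)" by (simp add: mult.commute)
  also have "\<dots> = P n0 [^] m" using gm0 nat_pow_pow[OF g, of m0 m] by simp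
  finally have "P (\<lambda>x. int m0 * n x) = P (\<lambda>x. int m * n0 x)" by (simp add: P_pow)
  then have e: "int m0 * n x = int m * n0 x" using P_uniq[OF _ x] by blast
  then have e': "real m0 * real_of_int (n x) = real m * real_of_int (n0 x)"
    using arg_cong[OF e, of real_of_int] by simp
  have "phi g x = real_of_int (n0 x) / real m0" unfolding phi_def m0_def n0_def by simp
  also have "\<dots> = real_of_int (n x) / real m"
    using m m0 e' by (simp add: frac_eq_eq mult.commute)
  finally show ?thesis .
qed

lemma phi_P: "x \<in> S \<Longrightarrow> phi (P n) x = real_of_int (n x)"
proof -
  assume x: "x \<in> S"
  have p1: "P n [^] (1::nat) = P n" using P_closed[of n] by simp
  show ?thesis using phi_K[OF P_closed _ p1 x] by simp
qed

lemma phi_def': "g \<in> carrier G \<Longrightarrow> g [^] ordH g = P (coefH (g [^] ordH g))"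
  using ordH coefH by blast

lemma phi_mult:
  assumes g: "g \<in> carrier G" and h: "h \<in> carrier G" and x: "x \<in> S"
  shows "phi (g \<otimes> h) x = phi g x + phi h x"
proof -
  define mg where "mg = ordH g"
  define mh where "mh = ordH h"
  define ng where "ng = coefH (g [^] mg)"
  define nh where "nh = coefH (h [^] mh)"
  have mg: "0 < mg" and gm: "g [^] mg = P ng" using ordH[OF g] phi_def'[OF g] unfolding mg_def ng_def by auto
  have mh: "0 < mh" and hm: "h [^] mh = P nh" using ordH[OF h] phi_def'[OF h] unfolding mh_def nh_def by auto
  have "(g \<otimes> h) [^] (mg * mh) = g [^] (mg * mh) \<otimes> h [^] (mg * mh)"
    by (rule pow_mult_distrib[OF m_comm[OF g h] g h])
  also have "g [^] (mg * mh) = P ng [^] mh" using gm nat_pow_pow[OF g, of mg mh] by simp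
  also have "h [^] (mg * mh) = P nh [^] mg" using hm nat_pow_pow[OF h, of mh mg] by (simp add: mult.commute)
  finally have "(g \<otimes> h) [^] (mg * mh) = P (\<lambda>x. int mh * ng x + int mg * nh x)"
    by (simp add: P_pow P_mult)
  then have "phi (g \<otimes> h) x = real_of_int (int mh * ng x + int mg * nh x) / real (mg * mh)"
    using phi_K[OF m_closed[OF g h] _ _ x] mg mh by (metis (no_types) nat_0_less_mult_iff)
  also have "\<dots> = real_of_int (ng x) / real mg + real_of_int (nh x) / real mh"
    using mg mh by (simp add: field_simps)
  also have "\<dots> = phi g x + phi h x" unfolding phi_def mg_def mh_def ng_def nh_def by simp
  finally show ?thesis .
qed

lemma phi_one: "x \<in> S \<Longrightarrow> phi \<one> x = 0"
  using phi_P[of x "\<lambda>_. 0"] P_zero by simp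

lemma phi_inv: "g \<in> carrier G \<Longrightarrow> x \<in> S \<Longrightarrow> phi (inv g) x = - phi g x"
  using phi_mult[of g "inv g" x] phi_one[of x] by simp

definition sec where "sec q = (let g = (SOME g. g \<in> q) in g \<otimes> P (\<lambda>x. - \<lfloor>phi g x\<rfloor>))"

lemma sec_props:
  assumes q: "q \<in> rcosets H"
  shows "sec q \<in> q" "\<And>x. x \<in> S \<Longrightarrow> 0 \<le> phi (sec q) x \<and> phi (sec q) x < 1"
proof -
  obtain y where y: "y \<in> carrier G" "q = H #> y" using q unfolding RCOSETS_def by auto
  have Hc: "H \<subseteq> carrier G" using subH by (rule subgroup.subset)
  have "y \<in> q" using rcos_self[OF y(1) subH] y by simp
  then have gq: "(SOME g. g \<in> q) \<in> q" by (rule someI)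
  define g where "g = (SOME g. g \<in> q)"
  have gq': "g \<in> q" using gq by (simp add: g_def)
  have gc: "g \<in> carrier G" using gq' y r_coset_subset_G[OF Hc y(1)] by blast
  have qg: "q = H #> g" using repr_independence[OF _ y(1) subH] gq' y by simp
  define m where "m = (\<lambda>x. - \<lfloor>phi g x\<rfloor>)"
  have sq: "sec q = g \<otimes> P m" unfolding sec_def g_def m_def by (simp only: Let_def)
  have "P m \<otimes> g \<in> H #> g" using rcosI[OF P_in_H Hc gc] .
  then show "sec q \<in> q" using sq qg m_comm[OF gc P_closed] by simp
  fix x assume x: "x \<in> S"
  have "phi (sec q) x = phi g x + real_of_int (m x)" using sq phi_mult[OF gc P_closed x] phi_P[OF x] by simp
  also have "\<dots> = phi g x - real_of_int \<lfloor>phi g x\<rfloor>" by (simp add: m_def)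
  finally show "0 \<le> phi (sec q) x \<and> phi (sec q) x < 1"
    using of_int_floor_le[of "phi g x"] lt_floor_add_one[of "phi g x"] by linarith
qed

lemma cocycle_fin:
  assumes a: "a \<in> carrier G"
  shows "finite ((\<lambda>g. sec (H #> g) \<otimes> a \<otimes> inv (sec (H #> (g \<otimes> a)))) ` carrier G)"
proof -
  have Hc: "H \<subseteq> carrier G" using subH by (rule subgroup.subset)
  define B where "B = PiE S (\<lambda>x. {\<lfloor>phi a x\<rfloor> - 1 .. \<lfloor>phi a x\<rfloor> + 1})"
  have finB: "finite B" unfolding B_def using Sfin by (intro finite_PiE) auto
  have "(\<lambda>g. sec (H #> g) \<otimes> a \<otimes> inv (sec (H #> (g \<otimes> a)))) ` carrier G \<subseteq> P ` B"
  proof (rule image_subsetI)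
    fix g assume g: "g \<in> carrier G"
    have ga: "g \<otimes> a \<in> carrier G" using g a by simp
    define s1 where "s1 = sec (H #> g)"
    define s2 where "s2 = sec (H #> (g \<otimes> a))"
    have q1: "H #> g \<in> rcosets H" using rcosetsI[OF Hc g] .
    have q2: "H #> (g \<otimes> a) \<in> rcosets H" using rcosetsI[OF Hc ga] .
    obtain h1 where h1: "h1 \<in> H" "s1 = h1 \<otimes> g" using sec_props(1)[OF q1] unfolding s1_def r_coset_def by blast
    obtain h2 where h2: "h2 \<in> H" "s2 = h2 \<otimes> (g \<otimes> a)" using sec_props(1)[OF q2] unfolding s2_def r_coset_def by blast
    have h1c: "h1 \<in> carrier G" and h2c: "h2 \<in> carrier G" using h1 h2 Hc by auto
    have s1c: "s1 \<in> carrier G" and s2c: "s2 \<in> carrier G" using h1 h2 h1c h2c g ga by auto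
    define c where "c = s1 \<otimes> a \<otimes> inv s2"
    have "c = h1 \<otimes> inv h2" unfolding c_def h1(2) h2(2) by (rule id5[OF h1c h2c g a])
    then have cH: "c \<in> H" using h1 h2 subH by (simp add: subgroup.m_closed subgroup.m_inv_closed)
    define n where "n = restrict (coefH c) S"
    have cP: "c = P n" using coefH[OF cH] P_cong[of n "coefH c"] by (simp add: n_def)
    have "n \<in> B" unfolding B_def
    proof (rule PiE_I)
      fix x assume x: "x \<in> S"
      have "real_of_int (n x) = phi c x" using phi_P[OF x, of n] cP by simp
      also have "\<dots> = phi s1 x + phi a x - phi s2 x"
        unfolding c_def using phi_mult[OF m_closed[OF s1c a] inv_closed[OF s2c] x] phi_mult[OF s1c a x]
          phi_inv[OF s2c x] by simp
      finally have nx: "real_of_int (n x) = phi s1 x + phi a x - phi s2 x" .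
      have b1: "0 \<le> phi s1 x \<and> phi s1 x < 1" using sec_props(2)[OF q1 x] by (simp add: s1_def)
      have b2: "0 \<le> phi s2 x \<and> phi s2 x < 1" using sec_props(2)[OF q2 x] by (simp add: s2_def)
      have f1: "real_of_int \<lfloor>phi a x\<rfloor> \<le> phi a x" by (rule of_int_floor_le)
      have f2: "phi a x < real_of_int \<lfloor>phi a x\<rfloor> + 1" by (rule lt_floor_add_one)
      have "real_of_int (\<lfloor>phi a x\<rfloor> - 1) < real_of_int (n x)"
        using nx b1 b2 f1 of_int_diff[of "\<lfloor>phi a x\<rfloor>" 1] of_int_1 by linarith
      then have l: "\<lfloor>phi a x\<rfloor> - 1 < n x" by (simp only: of_int_less_iff)
      have "real_of_int (n x) < real_of_int (\<lfloor>phi a x\<rfloor> + 2)"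
        using nx b1 b2 f2 of_int_add[of "\<lfloor>phi a x\<rfloor>" 2] of_int_numeral[of "num.Bit0 num.One"] by linarith
      then have u: "n x < \<lfloor>phi a x\<rfloor> + 2" by (simp only: of_int_less_iff)
      show "n x \<in> {\<lfloor>phi a x\<rfloor> - 1 .. \<lfloor>phi a x\<rfloor> + 1}" using l u by simp
    next
      fix x assume "x \<notin> S" then show "n x = undefined" by (simp add: n_def)
    qed
    then show "sec (H #> g) \<otimes> a \<otimes> inv (sec (H #> (g \<otimes> a))) \<in> P ` B"
      using cP unfolding c_def s1_def s2_def by blast
  qed
  then show ?thesis using finB finite_surj by blast
qed

theorem result:
  assumes cnt: "countable (carrier G)"
  shows "coarsely_split (G\<lparr>carrier := H\<rparr>) G (G Mod H) (\<lambda>h. h) (\<lambda>g. H #> g)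
      \<and> coarsely_equivalent_groups G (G\<lparr>carrier := H\<rparr> \<times>\<times> (G Mod H))"
  by (rule split_main[OF subH cnt _ ballI[OF cocycle_fin]]) (use sec_props(1) in auto)

end

theorem mainTheorem1:
  fixes G :: "('a, 'b) monoid_scheme" and S :: "'a set"
  assumes "comm_group G"
    and "countable (carrier G)"
    and "finite_rational_rank G"
    and "maximal_indep_inf_order G S"
  shows "coarsely_split (G\<lparr>carrier := generate G S\<rparr>) G (G Mod (generate G S))
           (\<lambda>h. h) (\<lambda>g. generate G S #>\<^bsub>G\<^esub> g)
         \<and> coarsely_equivalent_groups G
             (G\<lparr>carrier := generate G S\<rparr> \<times>\<times> (G Mod (generate G S)))"
proof -
  have rs: "rk_setup G S" unfolding rk_setup_def rk_setup_axioms_def using assms by auto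
  show ?thesis by (rule rk_setup.result[OF rs assms(2)])
qed

end
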